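(* Assume complete resource pooling. The normalizing constant $B$ of the stationary distributions of the detailed FCFS matching chains is given by $$B=\Big(\prod_{j=1}^J\beta_{s_j}\sum_{(S_1,\ldots,S_J)\in\mathcal{P}_J}\prod_{\ell=1}^{J-1}\big(\beta_{\{S_1,\ldots,S_\ell\}}-\alpha_{\mathcal{U}(\{S_1,\ldots,S_\ell\})}\big)^{-1}\Big)^{-1}=\Big(\prod_{i=1}^I\alpha_{c_i}\sum_{(C_1,\ldots,C_I)\in\mathcal{P}_I}\prod_{\ell=1}^{I-1}\big(\beta_{\mathcal{S}(\{C_1,\ldots,C_\ell\})}-\alpha_{\{C_1,\ldots,C_\ell\}}\big)^{-1}\Big)^{-1},$$ where $\mathcal{P}_J$ is the set of all orderings of $s_1,\ldots,s_J$ and $\mathcal{P}_I$ the set of all orderings of $c_1,\ldots,c_I$.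
   Context: Setting: finite type sets $\mathcal{C}=\{c_1,\ldots,c_I\}$, $\mathcal{S}=\{s_1,\ldots,s_J\}$, connected bipartite compatibility graph $G=(\mathcal{C},\mathcal{S},\mathcal{E})$, independent i.i.d. sequences $(c^m)_{m\in\mathbb{Z}}\sim\alpha$, $(s^n)_{n\in\mathbb{Z}}\sim\beta$, all probabilities positive. $\mathcal{S}(C)$ = server types compatible with some type in $C$; $\mathcal{C}(S)$ = customer types compatible with some type in $S$; $\mathcal{U}(S)=\mathcal{C}\setminus\mathcal{C}(\mathcal{S}\setminus S)$; $\alpha_C,\beta_S$ are sums of probabilities. Complete resource pooling: $\beta_S>\alpha_{\mathcal{U}(S)}$ for all nonempty proper $S\subsetneq\mathcal{S}$. Let $A$ be the a.s. unique (perfect) FCFS matching over $\mathbb{Z}$ (for each $(m,n)\in A$, every compatible $s^l$, $l<n$, is matched to some $c^k$, $k<m$, and every compatible $c^k$, $k<m$, to some $s^l$, $l<n$); set $\tilde{s}^m=s^n$ for $(m,n)\in A$. The server-by-server detailed chain $Z^s_N$: on the customer line position $m$ holds $\tilde{s}^m$ if $c^m$ is matched to a server of index $\le N$, else $c^m$; $Z^s_N$ is the word from the first position holding an unmatched customer to the last position holding an exchanged server (empty if the latter precedes the former). Its stationary distribution is $\pi_{Z^s}(\mathfrak{z})=B\prod_i\alpha_{c_i}^{\#c_i}\prod_j\beta_{s_j}^{\#s_j}$ ($\#$ counting types in $\mathfrak{z}$), and $B$ denotes this normalizing constant. *)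

theory Defs
  imports "HOL-Analysis.Analysis"
begin

text \<open>Customer types are the elements of a finite type 'c, server types the elements
  of a finite type 's; the compatibility graph is given by E :: 'c => 's => bool.\<close>

definition srv_of :: "('c \<Rightarrow> 's \<Rightarrow> bool) \<Rightarrow> 'c set \<Rightarrow> 's set" where
  "srv_of E C = {s. \<exists>c\<in>C. E c s}"

definition cst_of :: "('c \<Rightarrow> 's \<Rightarrow> bool) \<Rightarrow> 's set \<Rightarrow> 'c set" where
  "cst_of E S = {c. \<exists>s\<in>S. E c s}"

text \<open>U(S) = C \ C(S \ S): customer types compatible only with server types in S.\<close>
definition only_cst :: "('c \<Rightarrow> 's \<Rightarrow> bool) \<Rightarrow> 's set \<Rightarrow> 'c set" where
  "only_cst E S = UNIV - cst_of E (UNIV - S)"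

definition bip_edges :: "('c \<Rightarrow> 's \<Rightarrow> bool) \<Rightarrow> (('c + 's) \<times> ('c + 's)) set" where
  "bip_edges E = {(Inl c, Inr s) | c s. E c s} \<union> {(Inr s, Inl c) | c s. E c s}"

definition bip_connected :: "('c \<Rightarrow> 's \<Rightarrow> bool) \<Rightarrow> bool" where
  "bip_connected E \<longleftrightarrow> (\<forall>u v. (u, v) \<in> (bip_edges E)\<^sup>*)"

definition complete_resource_pooling ::
  "('c \<Rightarrow> 's \<Rightarrow> bool) \<Rightarrow> ('c \<Rightarrow> real) \<Rightarrow> ('s \<Rightarrow> real) \<Rightarrow> bool" where
  "complete_resource_pooling E \<alpha> \<beta> \<longleftrightarrow>
     (\<forall>S. S \<noteq> {} \<and> S \<noteq> UNIV \<longrightarrow> sum \<beta> S > sum \<alpha> (only_cst E S))"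

text \<open>State space of the server-by-server detailed FCFS chain: words over customer
  letters (Inl) and server letters (Inr).\<close>
definition detailed_states :: "('c \<Rightarrow> 's \<Rightarrow> bool) \<Rightarrow> ('c + 's) list set" where
  "detailed_states E = {z. z = [] \<or>
     (isl (hd z) \<and> \<not> isl (last z) \<and>
      (\<forall>k l. k < l \<and> l < length z \<longrightarrow>
         (case (z ! k, z ! l) of (Inl c, Inr s) \<Rightarrow> \<not> E c s | _ \<Rightarrow> True)))}"

definition word_weight :: "('c \<Rightarrow> real) \<Rightarrow> ('s \<Rightarrow> real) \<Rightarrow> ('c + 's) list \<Rightarrow> real" where
  "word_weight \<alpha> \<beta> z = prod_list (map (case_sum \<alpha> \<beta>) z)"

text \<open>The normalizing constant B of pi(z) = B * word_weight z.\<close>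
definition norm_const ::
  "('c \<Rightarrow> 's \<Rightarrow> bool) \<Rightarrow> ('c \<Rightarrow> real) \<Rightarrow> ('s \<Rightarrow> real) \<Rightarrow> real" where
  "norm_const E \<alpha> \<beta> = inverse (infsum (word_weight \<alpha> \<beta>) (detailed_states E))"

definition orderings :: "'a::finite list set" where
  "orderings = {xs. distinct xs \<and> set xs = UNIV}"

end

theory Submission
  imports Defs
begin


lemma has_sum_Sigma_nonneg:
  fixes f :: "'a \<times> 'b \<Rightarrow> real"
  assumes "\<And>x. x \<in> A \<Longrightarrow> ((\<lambda>y. f (x, y)) has_sum g x) (B x)"
    and "(g has_sum S) A"
    and "\<And>x y. x \<in> A \<Longrightarrow> y \<in> B x \<Longrightarrow> f (x, y) \<ge> 0"
  shows "(f has_sum S) (Sigma A B)"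
proof (rule has_sum_SigmaI[OF assms(1,2)])
  show "f summable_on Sigma A B"
    by (rule summable_on_SigmaI[where g=g]) (use assms in \<open>auto intro: has_sum_imp_summable\<close>)
qed

lemma has_sum_Union_nonneg:
  fixes f :: "'b \<Rightarrow> real"
  assumes "\<And>x. x \<in> A \<Longrightarrow> (f has_sum g x) (B x)"
    and "(g has_sum S) A"
    and "\<And>x y. x \<in> A \<Longrightarrow> y \<in> B x \<Longrightarrow> f y \<ge> 0"
    and "disjoint_family_on B A"
  shows "(f has_sum S) (\<Union>x\<in>A. B x)"
proof -
  have "((f \<circ> snd) has_sum S) (Sigma A B)"
    using has_sum_Sigma_nonneg[where f="f \<circ> snd" and g=g and A=A and B=B and S=S] assms by auto
  moreover have "inj_on snd (Sigma A B)"
    using assms(4) by (force simp: disjoint_family_on_def inj_on_def)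
  moreover have "snd ` Sigma A B = (\<Union>x\<in>A. B x)" by force
  ultimately show ?thesis using has_sum_reindex by metis
qed

lemma has_sum_prod_nonneg:
  fixes f :: "'a \<Rightarrow> real" and g :: "'b \<Rightarrow> real"
  assumes "(f has_sum a) A" "(g has_sum b) B"
    and "\<And>x. x \<in> A \<Longrightarrow> f x \<ge> 0" "\<And>y. y \<in> B \<Longrightarrow> g y \<ge> 0"
  shows "((\<lambda>(x,y). f x * g y) has_sum (a * b)) (A \<times> B)"
proof (rule has_sum_Sigma_nonneg[where g="\<lambda>x. f x * b"])
  show "((\<lambda>y. case (x, y) of (x, y) \<Rightarrow> f x * g y) has_sum f x * b) B" for x
    using has_sum_cmult_right[OF assms(2), of "f x"] by simp
  show "((\<lambda>x. f x * b) has_sum a * b) A"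
    using has_sum_cmult_left[OF assms(1)] by simp
qed (use assms in auto)

lemma has_sum_lists_geometric:
  fixes w :: "'a \<Rightarrow> real"
  assumes fin: "finite A" and nn: "\<And>a. a \<in> A \<Longrightarrow> w a \<ge> 0" and t: "sum w A < 1"
  shows "((\<lambda>u. prod_list (map w u)) has_sum (1 / (1 - sum w A))) (lists A)"
proof -
  define L where "L n = {xs. set xs \<subseteq> A \<and> length xs = n}" for n
  have finL: "finite (L n)" for n unfolding L_def by (rule finite_lists_length_eq[OF fin])
  have sumL: "(\<Sum>u\<in>L n. prod_list (map w u)) = sum w A ^ n" for n
  proof (induction n)
    case 0
    have "L 0 = {[]}" unfolding L_def by auto
    then show ?case by simp
  next
    case (Suc n)
    have eq: "L (Suc n) = (\<lambda>(a,u). a # u) ` (A \<times> L n)"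
      unfolding L_def by (auto simp: length_Suc_conv image_iff)
    have inj: "inj_on (\<lambda>(a,u). a # u) (A \<times> L n)" by (auto simp: inj_on_def)
    have "(\<Sum>u\<in>L (Suc n). prod_list (map w u)) = (\<Sum>(a,u)\<in>A \<times> L n. w a * prod_list (map w u))"
      unfolding eq by (subst sum.reindex[OF inj]) (simp add: case_prod_unfold)
    also have "\<dots> = sum w A * (\<Sum>u\<in>L n. prod_list (map w u))"
      by (simp add: sum_product sum.cartesian_product)
    finally show ?case using Suc by simp
  qed
  have nnw: "0 \<le> sum w A" using nn by (simp add: sum_nonneg)
  have geo: "((\<lambda>n. sum w A ^ n) has_sum (1 / (1 - sum w A))) UNIV"
    by (rule sums_nonneg_imp_has_sum) (use geometric_sums[of "sum w A"] nnw t in auto)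
  have "((\<lambda>u. prod_list (map w u)) has_sum (1 / (1 - sum w A))) (\<Union>n\<in>UNIV. L n)"
  proof (rule has_sum_Union_nonneg[OF _ geo])
    show "((\<lambda>u. prod_list (map w u)) has_sum sum w A ^ n) (L n)" for n
      using has_sum_finite[OF finL, of "\<lambda>u. prod_list (map w u)" n] sumL by simp
    show "0 \<le> prod_list (map w y)" if "y \<in> L n" for n y
      using that nn unfolding L_def by (intro prod_list_nonneg) fastforce
    show "disjoint_family_on L UNIV" unfolding disjoint_family_on_def L_def by auto
  qed
  moreover have "(\<Union>n\<in>UNIV. L n) = lists A" unfolding L_def by auto
  ultimately show ?thesis by simp
qed



fun okw :: "('a \<Rightarrow> 'b \<Rightarrow> bool) \<Rightarrow> 'a set \<Rightarrow> ('a + 'b) list \<Rightarrow> bool" where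
  "okw R C [] = True"
| "okw R C (Inl c # v) = okw R (insert c C) v"
| "okw R C (Inr s # v) = (s \<notin> srv_of R C \<and> okw R C v)"

definition Vw :: "('a \<Rightarrow> 'b \<Rightarrow> bool) \<Rightarrow> 'a set \<Rightarrow> ('a + 'b) list set" where
  "Vw R C = {v. v \<noteq> [] \<and> okw R C v \<and> \<not> isl (last v)}"

definition Aw :: "('a \<Rightarrow> 'b \<Rightarrow> bool) \<Rightarrow> 'a set \<Rightarrow> ('a + 'b) set" where
  "Aw R C = Inl ` C \<union> Inr ` (- srv_of R C)"

lemma okw_append_lists: "u \<in> lists (Aw R C) \<Longrightarrow> okw R C (u @ v) = okw R C v"
proof (induction u)
  case (Cons a u)
  show ?case
  proof (cases a)
    case (Inl c)
    with Cons.prems have "c \<in> C" by (auto simp: Aw_def)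
    then have "insert c C = C" by blast
    then show ?thesis using Inl Cons by simp
  next
    case (Inr s)
    with Cons.prems have "s \<notin> srv_of R C" by (auto simp: Aw_def)
    then show ?thesis using Inr Cons by simp
  qed
qed simp

lemma okw_lists: "u \<in> lists (Aw R C) \<Longrightarrow> okw R C u"
  using okw_append_lists[of u R C "[]"] by simp

lemma sep_inj_aux:
  "\<And>u2. u1 \<in> lists A \<Longrightarrow> u2 \<in> lists A \<Longrightarrow> a1 \<notin> A \<Longrightarrow> a2 \<notin> A \<Longrightarrow> u1 @ a1 # r1 = u2 @ a2 # r2
    \<Longrightarrow> u1 = u2 \<and> a1 = a2 \<and> r1 = r2"
proof (induction u1)
  case Nil
  then show ?case by (cases u2) auto
next
  case (Cons x u1)
  show ?case
  proof (cases u2)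
    case Nil
    have "x \<in> A" using Cons.prems(1) by simp
    then show ?thesis using Cons.prems(4,5) Nil by auto
  next
    case (Cons y u2')
    then have "u1 @ a1 # r1 = u2' @ a2 # r2" "x = y" using Cons.prems by auto
    moreover have "u2' \<in> lists A" using Cons.prems(2) \<open>u2 = y # u2'\<close> by simp
    ultimately show ?thesis using Cons.IH[of u2'] Cons.prems \<open>u2 = y # u2'\<close> by simp
  qed
qed

lemma sep_inj:
  assumes "u1 \<in> lists A" "u2 \<in> lists A" "a1 \<notin> A" "a2 \<notin> A" "u1 @ a1 # r1 = u2 @ a2 # r2"
  shows "u1 = u2 \<and> a1 = a2 \<and> r1 = r2"
  using sep_inj_aux[OF assms] .

lemma Vw_decomp:
  "Vw R C = (\<lambda>(u,s). u @ [Inr s]) ` (lists (Aw R C) \<times> (- srv_of R C))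
          \<union> (\<lambda>(u,(d,v)). u @ Inl d # v) ` (lists (Aw R C) \<times> Sigma (- C) (\<lambda>d. Vw R (insert d C)))"
  (is "_ = ?S1 \<union> ?S2")
proof
  show "?S1 \<union> ?S2 \<subseteq> Vw R C"
  proof
    fix z assume "z \<in> ?S1 \<union> ?S2"
    then show "z \<in> Vw R C"
    proof
      assume "z \<in> ?S1"
      then obtain u s where z: "z = u @ [Inr s]" "u \<in> lists (Aw R C)" "s \<notin> srv_of R C" by auto
      then show ?thesis by (simp add: Vw_def okw_append_lists)
    next
      assume "z \<in> ?S2"
      then obtain u d v where z: "z = u @ Inl d # v" "u \<in> lists (Aw R C)" "d \<notin> C" "v \<in> Vw R (insert d C)" by auto
      then show ?thesis by (simp add: Vw_def okw_append_lists)
    qed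
  qed
next
  show "Vw R C \<subseteq> ?S1 \<union> ?S2"
  proof
    fix z assume z: "z \<in> Vw R C"
    define u where "u = takeWhile (\<lambda>x. x \<in> Aw R C) z"
    define r where "r = dropWhile (\<lambda>x. x \<in> Aw R C) z"
    have zur: "z = u @ r" unfolding u_def r_def by simp
    have u: "u \<in> lists (Aw R C)" unfolding u_def
      by (auto dest: set_takeWhileD)
    show "z \<in> ?S1 \<union> ?S2"
    proof (cases r)
      case Nil
      then have zl: "z \<in> lists (Aw R C)" using zur u by simp
      from z have "z \<noteq> []" "\<not> isl (last z)" by (auto simp: Vw_def)
      then obtain s where ls: "last z = Inr s" by (cases "last z") auto
      have "z = butlast z @ [Inr s]" using \<open>z \<noteq> []\<close> ls by (metis append_butlast_last_id)
      moreover have "butlast z \<in> lists (Aw R C)" using zl by (auto dest: in_set_butlastD)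
      moreover have "Inr s \<in> Aw R C" using zl \<open>z \<noteq> []\<close> ls by (metis in_listsD last_in_set)
      then have "s \<notin> srv_of R C" by (auto simp: Aw_def)
      ultimately have "z \<in> ?S1" by (intro image_eqI[where x="(butlast z, s)"]) auto
      then show ?thesis by blast
    next
      case (Cons a r')
      have aA: "a \<notin> Aw R C" using Cons unfolding r_def
        by (metis dropWhile_eq_Cons_conv)
      have ok: "okw R C (a # r')" using z zur Cons u okw_append_lists by (auto simp: Vw_def)
      show ?thesis
      proof (cases a)
        case (Inl d)
        have dC: "d \<notin> C" using aA Inl by (auto simp: Aw_def)
        have "r' \<noteq> []" using z zur Cons Inl by (auto simp: Vw_def)
        then have "r' \<in> Vw R (insert d C)" using ok Inl z zur Cons by (auto simp: Vw_def)
        then have "z \<in> ?S2" using zur Cons Inl u dC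
          by (intro image_eqI[where x="(u, d, r')"]) auto
        then show ?thesis by blast
      next
        case (Inr s)
        then have False using ok aA by (auto simp: Aw_def)
        then show ?thesis ..
      qed
    qed
  qed
qed



locale wsetup =
  fixes R :: "'a::finite \<Rightarrow> 'b::finite \<Rightarrow> bool" and p :: "'a \<Rightarrow> real" and q :: "'b \<Rightarrow> real"
  assumes p_nn: "\<And>c. p c \<ge> 0" and q_nn: "\<And>s. q s \<ge> 0"
    and p_sum: "sum p UNIV = 1" and q_sum: "sum q UNIV = 1"
    and srv_all: "srv_of R UNIV = UNIV"
    and xpos: "\<And>C. C \<noteq> {} \<Longrightarrow> C \<noteq> UNIV \<Longrightarrow> sum q (srv_of R C) - sum p C > 0"
begin

definition xC where "xC C = sum q (srv_of R C) - sum p C"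
definition ords :: "'a set \<Rightarrow> 'a list set" where "ords C = {xs. distinct xs \<and> set xs = -C}"
definition Rord where
  "Rord C = (\<Sum>xs\<in>ords C. \<Prod>l\<in>{1..<length xs}. inverse (xC (C \<union> set (take l xs))))"
definition Kc where "Kc C = prod p (-C) * Rord C"
definition Pv where "Pv C = (if C = UNIV then 1 else Kc C / xC C)"

lemma finite_ords: "finite (ords C)"
proof (rule finite_subset)
  show "ords C \<subseteq> {xs. set xs \<subseteq> UNIV \<and> length xs = card (-C)}"
    unfolding ords_def using distinct_card by fastforce
qed (rule finite_lists_length_eq, simp)

lemma ords_UNIV: "ords UNIV = {[]}"
  unfolding ords_def by auto

lemma ords_decomp:
  assumes "C \<noteq> UNIV"
  shows "ords C = (\<lambda>(d,ys). d # ys) ` Sigma (-C) (\<lambda>d. ords (insert d C))"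
proof
  show "ords C \<subseteq> (\<lambda>(d,ys). d # ys) ` Sigma (-C) (\<lambda>d. ords (insert d C))"
  proof
    fix xs assume xs: "xs \<in> ords C"
    then have "xs \<noteq> []" using assms unfolding ords_def by auto
    then obtain d ys where "xs = d # ys" by (cases xs) auto
    with xs show "xs \<in> (\<lambda>(d,ys). d # ys) ` Sigma (-C) (\<lambda>d. ords (insert d C))"
      unfolding ords_def by (intro image_eqI[where x="(d,ys)"]) auto
  qed
next
  show "(\<lambda>(d,ys). d # ys) ` Sigma (-C) (\<lambda>d. ords (insert d C)) \<subseteq> ords C"
  proof
    fix xs assume "xs \<in> (\<lambda>(d,ys). d # ys) ` Sigma (-C) (\<lambda>d. ords (insert d C))"
    then obtain d ys where xs: "xs = d # ys" "d \<notin> C" "distinct ys" "set ys = - insert d C"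
      unfolding ords_def by auto
    then have "d \<notin> set ys" by auto
    moreover have "set (d # ys) = - C" using xs by auto
    ultimately show "xs \<in> ords C" using xs unfolding ords_def by simp
  qed
qed

lemma Rord_rec:
  assumes "C \<noteq> UNIV"
  shows "Rord C = (\<Sum>d\<in>-C. if insert d C = UNIV then 1 else inverse (xC (insert d C)) * Rord (insert d C))"
proof -
  have inj: "inj_on (\<lambda>(d,ys). d # ys) (Sigma (-C) (\<lambda>d. ords (insert d C)))"
    by (auto simp: inj_on_def)
  have "Rord C = (\<Sum>(d,ys)\<in>Sigma (-C) (\<lambda>d. ords (insert d C)).
          \<Prod>l\<in>{1..<Suc (length ys)}. inverse (xC (C \<union> set (take l (d # ys)))))"
    unfolding Rord_def ords_decomp[OF assms] by (subst sum.reindex[OF inj]) (simp add: case_prod_unfold)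
  also have "\<dots> = (\<Sum>d\<in>-C. \<Sum>ys\<in>ords (insert d C).
          \<Prod>l\<in>{1..<Suc (length ys)}. inverse (xC (C \<union> set (take l (d # ys)))))"
    by (rule sum.Sigma[symmetric]) (auto simp: finite_ords)
  also have "\<dots> = (\<Sum>d\<in>-C. if insert d C = UNIV then 1 else inverse (xC (insert d C)) * Rord (insert d C))"
  proof (rule sum.cong[OF refl])
    fix d assume d: "d \<in> -C"
    show "(\<Sum>ys\<in>ords (insert d C). \<Prod>l\<in>{1..<Suc (length ys)}. inverse (xC (C \<union> set (take l (d # ys)))))
        = (if insert d C = UNIV then 1 else inverse (xC (insert d C)) * Rord (insert d C))"
    proof (cases "insert d C = UNIV")
      case True
      then show ?thesis by (simp add: ords_UNIV)
    next
      case False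
      have "(\<Prod>l\<in>{1..<Suc (length ys)}. inverse (xC (C \<union> set (take l (d # ys)))))
          = inverse (xC (insert d C)) * (\<Prod>l\<in>{1..<length ys}. inverse (xC (insert d C \<union> set (take l ys))))"
        if ys: "ys \<in> ords (insert d C)" for ys
      proof -
        have "ys \<noteq> []"
        proof
          assume "ys = []"
          then have "- insert d C = {}" using ys by (simp add: ords_def)
          then show False using False by blast
        qed
        then have "1 < Suc (length ys)" by (cases ys) auto
        then have "(\<Prod>l\<in>{1..<Suc (length ys)}. inverse (xC (C \<union> set (take l (d # ys)))))
           = inverse (xC (C \<union> set (take 1 (d # ys)))) * (\<Prod>l\<in>{Suc 1..<Suc (length ys)}. inverse (xC (C \<union> set (take l (d # ys)))))"
          by (rule prod.atLeast_Suc_lessThan)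
        also have "(\<Prod>l\<in>{Suc 1..<Suc (length ys)}. inverse (xC (C \<union> set (take l (d # ys)))))
           = (\<Prod>l\<in>{1..<length ys}. inverse (xC (C \<union> set (take (Suc l) (d # ys)))))"
          by (rule prod.shift_bounds_Suc_ivl)
        also have "\<dots> = (\<Prod>l\<in>{1..<length ys}. inverse (xC (insert d C \<union> set (take l ys))))"
          by (rule prod.cong) (auto simp: insert_commute)
        finally show ?thesis by simp
      qed
      then show ?thesis using False
        by (simp add: Rord_def sum_distrib_left)
    qed
  qed
  finally show ?thesis .
qed

lemma K_rec:
  assumes "C \<noteq> UNIV"
  shows "Kc C = (\<Sum>d\<in>-C. p d * Pv (insert d C))"
proof -
  have "Kc C = (\<Sum>d\<in>-C. prod p (-C) * (if insert d C = UNIV then 1 else inverse (xC (insert d C)) * Rord (insert d C)))"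
    unfolding Kc_def Rord_rec[OF assms] by (simp add: sum_distrib_left)
  also have "\<dots> = (\<Sum>d\<in>-C. p d * Pv (insert d C))"
  proof (rule sum.cong[OF refl])
    fix d assume d: "d \<in> -C"
    have pr: "prod p (-C) = p d * prod p (- insert d C)"
      using d by (metis Compl_insert finite prod.remove)
    show "prod p (-C) * (if insert d C = UNIV then 1 else inverse (xC (insert d C)) * Rord (insert d C))
        = p d * Pv (insert d C)"
    proof (cases "insert d C = UNIV")
      case True
      then have "- insert d C = {}" by simp
      then show ?thesis using True pr by (simp add: Pv_def)
    next
      case False
      then show ?thesis using pr by (simp add: Pv_def Kc_def divide_inverse mult_ac)
    qed
  qed
  finally show ?thesis .
qed

end


lemma okw_UNIV: "okw R UNIV v \<Longrightarrow> srv_of R UNIV = UNIV \<Longrightarrow> \<forall>x\<in>set v. isl x"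
proof (induction v)
  case (Cons a v)
  then show ?case by (cases a) (auto simp: insert_absorb)
qed simp

lemma ww_append: "word_weight p q (u @ v) = word_weight p q u * word_weight p q v"
  by (simp add: word_weight_def)

context wsetup begin

lemma ww_nn: "word_weight p q z \<ge> 0"
  unfolding word_weight_def
  by (intro prod_list_nonneg) (auto simp: p_nn q_nn split: sum.splits)

lemma sum_compl_q: "sum q (-S) = 1 - sum q S"
  using sum.union_disjoint[of S "-S" q] q_sum by simp

lemma sum_compl_p: "sum p (-S) = 1 - sum p S"
  using sum.union_disjoint[of S "-S" p] p_sum by simp

lemma G_has_sum:
  assumes "C \<noteq> {}" "C \<noteq> UNIV"
  shows "(word_weight p q has_sum (1 / xC C)) (lists (Aw R C))"
proof -
  have sA: "sum (case_sum p q) (Aw R C) = sum p C + sum q (- srv_of R C)"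
    unfolding Aw_def
    by (subst sum.union_disjoint) (auto simp: sum.reindex)
  have x: "1 - sum (case_sum p q) (Aw R C) = xC C"
    unfolding sA xC_def sum_compl_q by simp
  have "sum (case_sum p q) (Aw R C) < 1" using xpos[OF assms] x unfolding xC_def by simp
  from has_sum_lists_geometric[of "Aw R C" "case_sum p q", OF _ _ this]
  show ?thesis unfolding x word_weight_def
    by (auto simp: p_nn q_nn split: sum.splits)
qed

lemma Vw_UNIV: "Vw R UNIV = {}"
proof -
  have "False" if "v \<in> Vw R UNIV" for v
  proof -
    from that have "v \<noteq> []" "okw R UNIV v" "\<not> isl (last v)" by (auto simp: Vw_def)
    with okw_UNIV[OF _ srv_all] show False by (metis last_in_set)
  qed
  then show ?thesis by blast
qed

lemma main_V: "C \<noteq> {} \<Longrightarrow> (word_weight p q has_sum (Pv C - 1)) (Vw R C)"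
proof (induction "card (-C)" arbitrary: C rule: less_induct)
  case less
  show ?case
  proof (cases "C = UNIV")
    case True
    then show ?thesis by (simp add: Vw_UNIV Pv_def)
  next
    case nU: False
    let ?A = "Aw R C"
    let ?ww = "word_weight p q"
    have G: "(?ww has_sum (1 / xC C)) (lists ?A)" by (rule G_has_sum[OF less.prems nU])
    have IH: "(?ww has_sum (Pv (insert d C) - 1)) (Vw R (insert d C))" if d: "d \<in> -C" for d
    proof (rule less.hyps)
      have "- insert d C = -C - {d}" by auto
      moreover have "card (-C) > 0" using d by (auto simp: card_gt_0_iff)
      ultimately show "card (- insert d C) < card (- C)" using d by simp
    qed simp
    define bC where "bC = sum q (- srv_of R C)"
    have h1: "((\<lambda>(u,s). ?ww u * q s) has_sum (1 / xC C * bC)) (lists ?A \<times> (- srv_of R C))"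
      unfolding bC_def
      by (rule has_sum_prod_nonneg[OF G has_sum_finite]) (auto simp: ww_nn q_nn)
    have inj1: "inj_on (\<lambda>(u,s). u @ [Inr s]) (lists ?A \<times> (- srv_of R C))"
      by (auto simp: inj_on_def)
    have S1: "(?ww has_sum (1 / xC C * bC)) ((\<lambda>(u,s). u @ [Inr s]) ` (lists ?A \<times> (- srv_of R C)))"
      using h1 by (subst has_sum_reindex[OF inj1]) (simp add: o_def case_prod_unfold ww_append word_weight_def)
    define T where "T = (\<Sum>d\<in>-C. p d * (Pv (insert d C) - 1))"
    have hS: "((\<lambda>(d,v). p d * ?ww v) has_sum T) (Sigma (-C) (\<lambda>d. Vw R (insert d C)))"
      unfolding T_def
    proof (rule has_sum_Sigma_nonneg)
      show "((\<lambda>v. case (d, v) of (d, v) \<Rightarrow> p d * ?ww v) has_sum p d * (Pv (insert d C) - 1)) (Vw R (insert d C))"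
        if "d \<in> -C" for d
        using has_sum_cmult_right[OF IH[OF that], of "p d"] by simp
      show "((\<lambda>d. p d * (Pv (insert d C) - 1)) has_sum (\<Sum>d\<in>-C. p d * (Pv (insert d C) - 1))) (-C)"
        by (rule has_sum_finite) simp
    qed (auto simp: p_nn ww_nn)
    have h2: "((\<lambda>(u,dv). ?ww u * (case dv of (d,v) \<Rightarrow> p d * ?ww v)) has_sum (1 / xC C * T))
        (lists ?A \<times> Sigma (-C) (\<lambda>d. Vw R (insert d C)))"
      by (rule has_sum_prod_nonneg[OF G hS]) (auto simp: ww_nn p_nn)
    have inj2: "inj_on (\<lambda>(u,(d,v)). u @ Inl d # v) (lists ?A \<times> Sigma (-C) (\<lambda>d. Vw R (insert d C)))"
    proof (rule inj_onI)
      fix x y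
      assume x: "x \<in> lists ?A \<times> Sigma (-C) (\<lambda>d. Vw R (insert d C))"
        and y: "y \<in> lists ?A \<times> Sigma (-C) (\<lambda>d. Vw R (insert d C))"
        and eq: "(\<lambda>(u,(d,v)). u @ Inl d # v) x = (\<lambda>(u,(d,v)). u @ Inl d # v) y"
      obtain u d v where xx: "x = (u,d,v)" by (cases x) auto
      obtain u' d' v' where yy: "y = (u',d',v')" by (cases y) auto
      have "u \<in> lists ?A" "d \<notin> C" "u' \<in> lists ?A" "d' \<notin> C" "u @ Inl d # v = u' @ Inl d' # v'"
        using x y eq xx yy by auto
      moreover have "Inl d \<notin> ?A" "Inl d' \<notin> ?A" using \<open>d \<notin> C\<close> \<open>d' \<notin> C\<close> by (auto simp: Aw_def)
      ultimately have "u = u' \<and> d = d' \<and> v = v'"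
        using sep_inj[of u ?A u' "Inl d" "Inl d'" v v'] by simp
      then show "x = y" using xx yy by simp
    qed
    have S2: "(?ww has_sum (1 / xC C * T)) ((\<lambda>(u,(d,v)). u @ Inl d # v) ` (lists ?A \<times> Sigma (-C) (\<lambda>d. Vw R (insert d C))))"
      using h2 by (subst has_sum_reindex[OF inj2]) (simp add: o_def case_prod_unfold ww_append word_weight_def)
    have disj: "(\<lambda>(u,s). u @ [Inr s]) ` (lists ?A \<times> (- srv_of R C)) \<inter>
       (\<lambda>(u,(d,v)). u @ Inl d # v) ` (lists ?A \<times> Sigma (-C) (\<lambda>d. Vw R (insert d C))) = {}"
    proof -
      have i1: "x \<in> lists ?A" if "x \<in> (\<lambda>(u,s). u @ [Inr s]) ` (lists ?A \<times> (- srv_of R C))" for x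
        using that by (auto simp: Aw_def)
      have i2: "x \<notin> lists ?A" if "x \<in> (\<lambda>(u,(d,v)). u @ Inl d # v) ` (lists ?A \<times> Sigma (-C) (\<lambda>d. Vw R (insert d C)))" for x
        using that by (auto simp: Aw_def)
      show ?thesis
      proof (rule equals0I)
        fix x assume xin: "x \<in> (\<lambda>(u,s). u @ [Inr s]) ` (lists ?A \<times> (- srv_of R C)) \<inter>
         (\<lambda>(u,(d,v)). u @ Inl d # v) ` (lists ?A \<times> Sigma (-C) (\<lambda>d. Vw R (insert d C)))"
        have "x \<in> lists ?A" by (rule i1[OF IntD1[OF xin]])
        moreover have "x \<notin> lists ?A" by (rule i2[OF IntD2[OF xin]])
        ultimately show False by simp
      qed
    qed
    have all: "(?ww has_sum (1 / xC C * bC + 1 / xC C * T)) (Vw R C)"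
      unfolding Vw_decomp[of R C] by (rule has_sum_Un_disjoint[OF S1 S2 disj])
    have xp: "xC C > 0" using xpos[OF less.prems nU] by (simp add: xC_def)
    have T: "T = Kc C - (1 - sum p C)"
      unfolding T_def K_rec[OF nU] by (simp add: right_diff_distrib sum_subtractf sum_compl_p)
    have bC: "bC = 1 - sum q (srv_of R C)" unfolding bC_def by (rule sum_compl_q)
    have "1 / xC C * bC + 1 / xC C * T = Pv C - 1"
    proof -
      have "bC + T = Kc C - xC C" unfolding T bC xC_def by simp
      have "1 / xC C * bC + 1 / xC C * T = (bC + T) / xC C" by (simp add: add_divide_distrib)
      also have "\<dots> = (Kc C - xC C) / xC C" using \<open>bC + T = Kc C - xC C\<close> by simp
      also have "\<dots> = Kc C / xC C - 1" using xp by (simp add: diff_divide_distrib)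
      finally show ?thesis using nU by (simp add: Pv_def)
    qed
    then show ?thesis using all by simp
  qed
qed

end


lemma okw_iff:
  "okw R C z \<longleftrightarrow> (\<forall>l<length z. \<forall>s. z!l = Inr s \<longrightarrow> s \<notin> srv_of R C \<and> (\<forall>k<l. \<forall>c. z!k = Inl c \<longrightarrow> \<not> R c s))"
proof (induction z arbitrary: C)
  case Nil
  then show ?case by simp
next
  case (Cons a z)
  show ?case
  proof (cases a)
    case (Inl c)
    have "okw R C (a # z) = okw R (insert c C) z" using Inl by simp
    also have "\<dots> = (\<forall>l<length z. \<forall>s. z!l = Inr s \<longrightarrow> s \<notin> srv_of R (insert c C) \<and> (\<forall>k<l. \<forall>c. z!k = Inl c \<longrightarrow> \<not> R c s))"
      by (rule Cons.IH)
    also have "\<dots> = (\<forall>l<length (a#z). \<forall>s. (a#z)!l = Inr s \<longrightarrow> s \<notin> srv_of R C \<and> (\<forall>k<l. \<forall>c. (a#z)!k = Inl c \<longrightarrow> \<not> R c s))"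
      using Inl by (simp add: All_less_Suc2 srv_of_def) blast
    finally show ?thesis .
  next
    case (Inr s0)
    have "okw R C (a # z) = (s0 \<notin> srv_of R C \<and> okw R C z)" using Inr by simp
    also have "\<dots> = (s0 \<notin> srv_of R C \<and> (\<forall>l<length z. \<forall>s. z!l = Inr s \<longrightarrow> s \<notin> srv_of R C \<and> (\<forall>k<l. \<forall>c. z!k = Inl c \<longrightarrow> \<not> R c s)))"
      using Cons.IH by simp
    also have "\<dots> = (\<forall>l<length (a#z). \<forall>s. (a#z)!l = Inr s \<longrightarrow> s \<notin> srv_of R C \<and> (\<forall>k<l. \<forall>c. (a#z)!k = Inl c \<longrightarrow> \<not> R c s))"
      using Inr by (simp add: All_less_Suc2)
    finally show ?thesis .
  qed
qed

lemma pairwise_iff: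
  "(\<forall>k l. k < l \<and> l < length z \<longrightarrow> (case (z ! k, z ! l) of (Inl c, Inr s) \<Rightarrow> \<not> R c s | _ \<Rightarrow> True))
   \<longleftrightarrow> (\<forall>l<length z. \<forall>s. z!l = Inr s \<longrightarrow> s \<notin> srv_of R {} \<and> (\<forall>k<l. \<forall>c. z!k = Inl c \<longrightarrow> \<not> R c s))"
proof
  assume H: "\<forall>k l. k < l \<and> l < length z \<longrightarrow> (case (z ! k, z ! l) of (Inl c, Inr s) \<Rightarrow> \<not> R c s | _ \<Rightarrow> True)"
  show "\<forall>l<length z. \<forall>s. z!l = Inr s \<longrightarrow> s \<notin> srv_of R {} \<and> (\<forall>k<l. \<forall>c. z!k = Inl c \<longrightarrow> \<not> R c s)"
  proof (intro allI impI conjI)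
    fix l s k c assume "l < length z" "z!l = Inr s" "k < l" "z!k = Inl c"
    then show "\<not> R c s" using H[rule_format, of k l] by simp
  qed (simp add: srv_of_def)
next
  assume H: "\<forall>l<length z. \<forall>s. z!l = Inr s \<longrightarrow> s \<notin> srv_of R {} \<and> (\<forall>k<l. \<forall>c. z!k = Inl c \<longrightarrow> \<not> R c s)"
  show "\<forall>k l. k < l \<and> l < length z \<longrightarrow> (case (z ! k, z ! l) of (Inl c, Inr s) \<Rightarrow> \<not> R c s | _ \<Rightarrow> True)"
  proof (intro allI impI)
    fix k l assume kl: "k < l \<and> l < length z"
    show "case (z ! k, z ! l) of (Inl c, Inr s) \<Rightarrow> \<not> R c s | _ \<Rightarrow> True"
      using H kl by (auto split: sum.splits)
  qed
qed

lemma detailed_states_okw: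
  "detailed_states R = {z. z = [] \<or> (isl (hd z) \<and> \<not> isl (last z) \<and> okw R {} z)}"
  unfolding detailed_states_def okw_iff pairwise_iff by simp

lemma detailed_states_decomp:
  "detailed_states R = insert [] ((\<lambda>(c,v). Inl c # v) ` Sigma UNIV (\<lambda>c. Vw R {c}))"
proof
  show "detailed_states R \<subseteq> insert [] ((\<lambda>(c,v). Inl c # v) ` Sigma UNIV (\<lambda>c. Vw R {c}))"
  proof
    fix z assume "z \<in> detailed_states R"
    then have z: "z = [] \<or> (isl (hd z) \<and> \<not> isl (last z) \<and> okw R {} z)" by (simp add: detailed_states_okw)
    show "z \<in> insert [] ((\<lambda>(c,v). Inl c # v) ` Sigma UNIV (\<lambda>c. Vw R {c}))"
    proof (cases z)
      case Nil then show ?thesis by simp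
    next
      case (Cons a v)
      with z obtain c where a: "a = Inl c" by (cases a) auto
      have "v \<noteq> []" using z Cons a by auto
      then have "v \<in> Vw R {c}" using z Cons a by (auto simp: Vw_def)
      then show ?thesis using Cons a by (intro insertI2 image_eqI[where x="(c,v)"]) auto
    qed
  qed
next
  show "insert [] ((\<lambda>(c,v). Inl c # v) ` Sigma UNIV (\<lambda>c. Vw R {c})) \<subseteq> detailed_states R"
    unfolding detailed_states_okw by (auto simp: Vw_def)
qed

context wsetup begin

lemma total_has_sum: "(word_weight p q has_sum Kc {}) (detailed_states R)"
proof -
  let ?ww = "word_weight p q"
  define g where "g c = p c * (Pv {c} - 1)" for c
  have hS: "((\<lambda>(c,v). p c * ?ww v) has_sum (\<Sum>c\<in>UNIV. g c)) (Sigma UNIV (\<lambda>c. Vw R {c}))"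
  proof (rule has_sum_Sigma_nonneg)
    show "((\<lambda>v. case (c, v) of (c, v) \<Rightarrow> p c * ?ww v) has_sum g c) (Vw R {c})" for c
      using has_sum_cmult_right[OF main_V[of "{c}"], of "p c"] by (simp add: g_def)
    show "(g has_sum sum g UNIV) UNIV" by (rule has_sum_finite) simp
  qed (auto simp: p_nn ww_nn)
  have inj: "inj_on (\<lambda>(c,v). Inl c # v) (Sigma UNIV (\<lambda>c. Vw R {c}))"
    by (auto simp: inj_on_def)
  have hI: "(?ww has_sum (\<Sum>c\<in>UNIV. g c)) ((\<lambda>(c,v). Inl c # v) ` Sigma UNIV (\<lambda>c. Vw R {c}))"
    using hS by (subst has_sum_reindex[OF inj]) (simp add: o_def case_prod_unfold word_weight_def)
  have "[] \<notin> (\<lambda>(c,v). Inl c # v) ` Sigma UNIV (\<lambda>c. Vw R {c})" by auto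
  from has_sum_insert[OF this hI]
  have "(?ww has_sum (1 + (\<Sum>c\<in>UNIV. g c))) (detailed_states R)"
    unfolding detailed_states_decomp by (simp add: word_weight_def)
  moreover have "(\<Sum>c\<in>UNIV. g c) = Kc {} - 1"
  proof -
    have "Kc {} = (\<Sum>d\<in>UNIV. p d * Pv {d})" using K_rec[of "{}"] by simp
    then show ?thesis unfolding g_def by (simp add: right_diff_distrib sum_subtractf p_sum)
  qed
  ultimately show ?thesis by simp
qed

lemma Kc_empty:
  "Kc {} = (\<Prod>c\<in>UNIV. p c) * (\<Sum>xs\<in>orderings. \<Prod>l\<in>{1..<CARD('a)}.
              inverse (sum q (srv_of R (set (take l xs))) - sum p (set (take l xs))))"
proof -
  have o: "ords {} = orderings" unfolding ords_def orderings_def by simp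
  have "Rord {} = (\<Sum>xs\<in>orderings. \<Prod>l\<in>{1..<CARD('a)}.
              inverse (sum q (srv_of R (set (take l xs))) - sum p (set (take l xs))))"
    unfolding Rord_def o
  proof (rule sum.cong[OF refl])
    fix xs :: "'a list" assume "xs \<in> orderings"
    then have "length xs = CARD('a)" unfolding orderings_def using distinct_card by fastforce
    then show "(\<Prod>l\<in>{1..<length xs}. inverse (xC ({} \<union> set (take l xs)))) =
      (\<Prod>l\<in>{1..<CARD('a)}. inverse (sum q (srv_of R (set (take l xs))) - sum p (set (take l xs))))"
      by (simp add: xC_def)
  qed
  then show ?thesis unfolding Kc_def by simp
qed

end


definition sw :: "'a + 'b \<Rightarrow> 'b + 'a" where "sw x = (case x of Inl a \<Rightarrow> Inr a | Inr b \<Rightarrow> Inl b)"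
definition rs :: "('a + 'b) list \<Rightarrow> ('b + 'a) list" where "rs z = rev (map sw z)"

lemma sw_sw[simp]: "sw (sw x) = x" by (cases x) (auto simp: sw_def)
lemma rs_rs[simp]: "rs (rs z) = z" by (simp add: rs_def rev_map o_def)
lemma sw_Inl[simp]: "sw (Inl a) = Inr a" and sw_Inr[simp]: "sw (Inr b) = Inl b" by (auto simp: sw_def)
lemma sw_eq_Inl: "sw x = Inl b \<longleftrightarrow> x = Inr b" by (cases x) auto
lemma sw_eq_Inr: "sw x = Inr a \<longleftrightarrow> x = Inl a" by (cases x) auto

lemma rs_detailed:
  assumes "z \<in> detailed_states E"
  shows "rs z \<in> detailed_states (\<lambda>s c. E c s)"
proof (cases "z = []")
  case True then show ?thesis by (simp add: rs_def detailed_states_def)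
next
  case False
  let ?n = "length z"
  from assms False have hd: "isl (hd z)" and lst: "\<not> isl (last z)"
    and pw: "\<And>k l. k < l \<Longrightarrow> l < ?n \<Longrightarrow> (case (z ! k, z ! l) of (Inl c, Inr s) \<Rightarrow> \<not> E c s | _ \<Rightarrow> True)"
    unfolding detailed_states_def by auto
  have h1: "hd (rs z) = sw (last z)" using False by (simp add: rs_def hd_rev last_map)
  have h2: "last (rs z) = sw (hd z)" using False by (simp add: rs_def last_rev hd_map)
  have i1: "isl (hd (rs z))" using lst h1 by (cases "last z") auto
  have i2: "\<not> isl (last (rs z))" using hd h2 by (cases "hd z") auto
  have nth: "rs z ! k = sw (z ! (?n - Suc k))" if "k < ?n" for k
    using that by (simp add: rs_def rev_nth)
  have "(case (rs z ! k, rs z ! l) of (Inl s, Inr c) \<Rightarrow> \<not> E c s | _ \<Rightarrow> True)"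
    if kl: "k < l" "l < length (rs z)" for k l
  proof -
    have l: "l < ?n" using kl by (simp add: rs_def)
    have a: "?n - Suc l < ?n - Suc k" "?n - Suc k < ?n" using kl l by auto
    show ?thesis
    proof (cases "rs z ! k")
      case (Inl s)
      show ?thesis
      proof (cases "rs z ! l")
        case (Inr c)
        have "z ! (?n - Suc k) = Inr s" using Inl nth[of k] kl l by (simp add: sw_eq_Inl)
        moreover have "z ! (?n - Suc l) = Inl c" using Inr nth[of l] l by (simp add: sw_eq_Inr)
        ultimately show ?thesis using pw[OF a] Inl Inr by simp
      qed (use Inl in simp)
    next
      case (Inr c) then show ?thesis by (cases "rs z ! l") auto
    qed
  qed
  then show ?thesis using i1 i2 unfolding detailed_states_def by auto
qed

lemma rs_bij: "bij_betw rs (detailed_states E) (detailed_states (\<lambda>s c. E c s))"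
proof (rule bij_betw_byWitness[where f'=rs])
  show "rs ` detailed_states E \<subseteq> detailed_states (\<lambda>s c. E c s)" using rs_detailed by blast
  show "rs ` detailed_states (\<lambda>s c. E c s) \<subseteq> detailed_states E"
    using rs_detailed[of _ "\<lambda>s c. E c s"] by auto
qed auto

lemma ww_rs: "word_weight b a (rs z) = word_weight a b z"
  unfolding word_weight_def rs_def
  by (induction z) (auto simp: sw_def split: sum.splits)

lemma drop_compl:
  assumes "distinct xs" "set xs = UNIV"
  shows "set (drop m xs) = - set (take m xs)"
proof -
  have "distinct (take m xs @ drop m xs)" using assms by simp
  then have "set (take m xs) \<inter> set (drop m xs) = {}" by (simp only: distinct_append)
  moreover have "set (take m xs) \<union> set (drop m xs) = UNIV" using assms(2)
    by (metis append_take_drop_id set_append)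
  ultimately show ?thesis by blast
qed



theorem theorem5p3:
  fixes E :: "'c::finite \<Rightarrow> 's::finite \<Rightarrow> bool"
    and \<alpha> :: "'c \<Rightarrow> real" and \<beta> :: "'s \<Rightarrow> real"
  assumes conn: "bip_connected E"
    and \<alpha>_pos: "\<And>c. \<alpha> c > 0" and \<alpha>_sum: "sum \<alpha> UNIV = 1"
    and \<beta>_pos: "\<And>s. \<beta> s > 0" and \<beta>_sum: "sum \<beta> UNIV = 1"
    and crp: "complete_resource_pooling E \<alpha> \<beta>"
  shows "norm_const E \<alpha> \<beta> =
           inverse ((\<Prod>s\<in>UNIV. \<beta> s) *
             (\<Sum>xs\<in>orderings. \<Prod>l\<in>{1..<CARD('s)}.
                inverse (sum \<beta> (set (take l xs)) - sum \<alpha> (only_cst E (set (take l xs))))))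
       \<and> norm_const E \<alpha> \<beta> =
           inverse ((\<Prod>c\<in>UNIV. \<alpha> c) *
             (\<Sum>xs\<in>orderings. \<Prod>l\<in>{1..<CARD('c)}.
                inverse (sum \<beta> (srv_of E (set (take l xs))) - sum \<alpha> (set (take l xs)))))"
proof -
  have crp': "\<And>S. S \<noteq> {} \<Longrightarrow> S \<noteq> UNIV \<Longrightarrow> sum \<beta> S > sum \<alpha> (only_cst E S)"
    using crp unfolding complete_resource_pooling_def by blast
  have edge_c: "\<exists>s. E c s" for c
  proof -
    obtain s0 :: 's where True by simp
    have "(Inl c, Inr s0) \<in> (bip_edges E)\<^sup>*" using conn unfolding bip_connected_def by blast
    then show ?thesis
      by (cases rule: converse_rtranclE) (auto simp: bip_edges_def)
  qed
  have edge_s: "\<exists>c. E c s" for s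
  proof -
    obtain c0 :: 'c where True by simp
    have "(Inr s, Inl c0) \<in> (bip_edges E)\<^sup>*" using conn unfolding bip_connected_def by blast
    then show ?thesis
      by (cases rule: converse_rtranclE) (auto simp: bip_edges_def)
  qed
  have compl_a: "sum \<alpha> (-S) = 1 - sum \<alpha> S" for S
    using sum.union_disjoint[of S "-S" \<alpha>] \<alpha>_sum by simp
  have compl_b: "sum \<beta> (-S) = 1 - sum \<beta> S" for S
    using sum.union_disjoint[of S "-S" \<beta>] \<beta>_sum by simp
  interpret W1: wsetup E \<alpha> \<beta>
  proof
    show "\<And>c. 0 \<le> \<alpha> c" "\<And>s. 0 \<le> \<beta> s" using \<alpha>_pos \<beta>_pos less_imp_le by auto
    show "sum \<alpha> UNIV = 1" "sum \<beta> UNIV = 1" by (fact \<alpha>_sum \<beta>_sum)+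
    show "srv_of E UNIV = UNIV" using edge_s by (auto simp: srv_of_def)
    fix C :: "'c set" assume C: "C \<noteq> {}" "C \<noteq> UNIV"
    show "0 < sum \<beta> (srv_of E C) - sum \<alpha> C"
    proof (cases "srv_of E C = UNIV")
      case True
      have "sum \<alpha> (-C) > 0" using C \<alpha>_pos by (intro sum_pos) auto
      then show ?thesis using True \<beta>_sum compl_a[of C] by simp
    next
      case False
      obtain c where "c \<in> C" using C by blast
      then obtain s where "E c s" "c \<in> C" using edge_c by blast
      then have ne: "srv_of E C \<noteq> {}" by (auto simp: srv_of_def)
      have sub: "C \<subseteq> only_cst E (srv_of E C)"
        by (auto simp: only_cst_def cst_of_def srv_of_def)
      have "sum \<alpha> C \<le> sum \<alpha> (only_cst E (srv_of E C))"
        using sub \<alpha>_pos by (intro sum_mono2) (auto intro: less_imp_le)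
      also have "\<dots> < sum \<beta> (srv_of E C)" using crp'[OF ne False] .
      finally show ?thesis by simp
    qed
  qed
  have inf1: "infsum (word_weight \<alpha> \<beta>) (detailed_states E) = W1.Kc {}"
    using W1.total_has_sum by (rule infsumI)
  have part2: "norm_const E \<alpha> \<beta> =
           inverse ((\<Prod>c\<in>UNIV. \<alpha> c) *
             (\<Sum>xs\<in>orderings. \<Prod>l\<in>{1..<CARD('c)}.
                inverse (sum \<beta> (srv_of E (set (take l xs))) - sum \<alpha> (set (take l xs)))))"
    unfolding norm_const_def inf1 W1.Kc_empty ..
  let ?E' = "\<lambda>s c. E c s"
  have srv': "srv_of ?E' T = cst_of E T" for T by (auto simp: srv_of_def cst_of_def)
  interpret W2: wsetup ?E' \<beta> \<alpha>
  proof
    show "\<And>c. 0 \<le> \<alpha> c" "\<And>s. 0 \<le> \<beta> s" using \<alpha>_pos \<beta>_pos less_imp_le by auto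
    show "sum \<alpha> UNIV = 1" "sum \<beta> UNIV = 1" by (fact \<alpha>_sum \<beta>_sum)+
    show "srv_of ?E' UNIV = UNIV" using edge_c by (auto simp: srv_of_def)
    fix T :: "'s set" assume T: "T \<noteq> {}" "T \<noteq> UNIV"
    have "-T \<noteq> {}" "-T \<noteq> UNIV" using T by auto
    from crp'[OF this] have "sum \<beta> (-T) > sum \<alpha> (only_cst E (-T))" .
    moreover have "only_cst E (-T) = - cst_of E T"
    proof -
      have "UNIV - (-T) = T" by blast
      then show ?thesis by (simp add: only_cst_def Compl_eq_Diff_UNIV)
    qed
    ultimately show "0 < sum \<alpha> (srv_of ?E' T) - sum \<beta> T"
      using compl_a compl_b srv' by simp
  qed
  have "infsum (word_weight \<alpha> \<beta>) (detailed_states E)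
      = infsum (\<lambda>z. word_weight \<beta> \<alpha> (rs z)) (detailed_states E)"
    by (simp add: ww_rs)
  also have "\<dots> = infsum (word_weight \<beta> \<alpha>) (detailed_states ?E')"
    by (rule infsum_reindex_bij_betw[OF rs_bij])
  also have "\<dots> = W2.Kc {}"
    using W2.total_has_sum by (rule infsumI)
  finally have inf2: "infsum (word_weight \<alpha> \<beta>) (detailed_states E) = W2.Kc {}" .
  have sumeq: "(\<Sum>xs\<in>(orderings :: 's list set). \<Prod>l\<in>{1..<CARD('s)}.
                inverse (sum \<alpha> (srv_of ?E' (set (take l xs))) - sum \<beta> (set (take l xs))))
     = (\<Sum>xs\<in>orderings. \<Prod>l\<in>{1..<CARD('s)}.
                inverse (sum \<beta> (set (take l xs)) - sum \<alpha> (only_cst E (set (take l xs)))))"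
  proof (rule sum.reindex_bij_witness[where i=rev and j=rev])
    show "\<And>a. a \<in> orderings \<Longrightarrow> rev (rev a) = a" by simp
    show "\<And>a. a \<in> orderings \<Longrightarrow> rev a \<in> (orderings :: 's list set)" by (simp add: orderings_def)
    fix xs :: "'s list" assume xs: "xs \<in> orderings"
    have len: "length xs = CARD('s)" using xs unfolding orderings_def using distinct_card by fastforce
    have key: "set (take l (rev xs)) = - set (take (CARD('s) - l) xs)" for l
      using xs len by (simp add: take_rev drop_compl orderings_def)
    have fT: "sum \<beta> (- T) - sum \<alpha> (only_cst E (- T)) = sum \<alpha> (srv_of ?E' T) - sum \<beta> T" for T
    proof -
      have "UNIV - (-T) = T" by blast
      then have "only_cst E (-T) = - cst_of E T" by (simp add: only_cst_def Compl_eq_Diff_UNIV)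
      then show ?thesis using srv' compl_a compl_b by simp
    qed
    show "(\<Prod>l\<in>{1..<CARD('s)}. inverse (sum \<beta> (set (take l (rev xs))) - sum \<alpha> (only_cst E (set (take l (rev xs))))))
        = (\<Prod>l\<in>{1..<CARD('s)}. inverse (sum \<alpha> (srv_of ?E' (set (take l xs))) - sum \<beta> (set (take l xs))))"
      unfolding key fT
      by (rule prod.reindex_bij_witness[where i="\<lambda>l. CARD('s) - l" and j="\<lambda>l. CARD('s) - l"]) auto
  next
    fix xs :: "'s list" assume "xs \<in> orderings" then show "rev xs \<in> orderings" by (simp add: orderings_def)
  qed simp
  have part1: "norm_const E \<alpha> \<beta> =
           inverse ((\<Prod>s\<in>UNIV. \<beta> s) *
             (\<Sum>xs\<in>orderings. \<Prod>l\<in>{1..<CARD('s)}.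
                inverse (sum \<beta> (set (take l xs)) - sum \<alpha> (only_cst E (set (take l xs))))))"
    unfolding norm_const_def inf2 W2.Kc_empty sumeq ..
  show ?thesis using part1 part2 by blast
qed


end
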